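(* Let $[a,b]$ be an interval with $b-a=1$, let $\mu_0$ be a distribution and let $\mu_1$ be obtained from $\mu_0$ by the extreme move on $[a,b]$. Then $S[\mu_1]-S[\mu_0]\ge 3\,(M_2[\mu_1]-M_2[\mu_0])^2$.
   Context: A distribution is a finite set $\mu=\{(x_1,m_1),\dots,(x_k,m_k)\}$ with $x_i\in\mathbb R$ distinct and $m_i>0$; $\mu(A)=\sum_{x_i\in A}m_i$. Moments: $M_j[\mu]=\sum_i m_ix_i^j$. Spread: $S[\mu]=\sum_{i<j}|x_i-x_j|m_im_j$. The extreme move on $[a,b]$ applied to $\mu$ yields the unique distribution $\mu'$ with $\mu'\{a<x<b\}=0$, $\mu'(\{x\})=\mu(\{x\})$ for all $x\notin[a,b]$, $M_0[\mu']=M_0[\mu]$ and $M_1[\mu']=M_1[\mu]$ (i.e., all mass in $[a,b]$ is moved to the endpoints $a,b$ preserving total mass and center of mass). *)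

theory Defs
  imports Complex_Main
begin

text \<open>A distribution \<open>{(x_1,m_1),...,(x_k,m_k)}\<close> (distinct points, positive masses) is
represented by its mass function \<open>mu :: real \<Rightarrow> real\<close>: \<open>mu x\<close> is the mass at \<open>x\<close>
(0 if \<open>x\<close> is not an atom), with finite support and nonnegative values.\<close>

definition supp :: "(real \<Rightarrow> real) \<Rightarrow> real set" where
  "supp mu = {x. mu x \<noteq> 0}"

definition is_distribution :: "(real \<Rightarrow> real) \<Rightarrow> bool" where
  "is_distribution mu \<longleftrightarrow> finite (supp mu) \<and> (\<forall>x. mu x \<ge> 0)"

definition mass :: "(real \<Rightarrow> real) \<Rightarrow> real set \<Rightarrow> real" where
  "mass mu A = (\<Sum>x\<in>supp mu \<inter> A. mu x)"

definition moment :: "nat \<Rightarrow> (real \<Rightarrow> real) \<Rightarrow> real" where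
  "moment j mu = (\<Sum>x\<in>supp mu. mu x * x ^ j)"

definition spread :: "(real \<Rightarrow> real) \<Rightarrow> real" where
  "spread mu = (\<Sum>(x,y)\<in>{(x,y). x \<in> supp mu \<and> y \<in> supp mu \<and> x < y}. \<bar>x - y\<bar> * mu x * mu y)"

definition extreme_move :: "real \<Rightarrow> real \<Rightarrow> (real \<Rightarrow> real) \<Rightarrow> (real \<Rightarrow> real) \<Rightarrow> bool" where
  "extreme_move a b mu mu' \<longleftrightarrow>
     is_distribution mu' \<and>
     mass mu' {a<..<b} = 0 \<and>
     (\<forall>x. x \<notin> {a..b} \<longrightarrow> mass mu' {x} = mass mu {x}) \<and>
     moment 0 mu' = moment 0 mu \<and>
     moment 1 mu' = moment 1 mu"

end

theory Submission imports Defs "HOL-Analysis.Analysis" begin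


lemma poly_int:
  fixes a c p q r :: real
  assumes "a \<le> c"
  shows "((\<lambda>u. p + q*u + r*u^2) has_integral (p*(c-a) + q*(c^2-a^2)/2 + r*(c^3-a^3)/3)) {a..c}"
proof -
  have "((\<lambda>u. p + q*u + r*u^2) has_integral
     ((\<lambda>u. p*u + q*u^2/2 + r*u^3/3) c - (\<lambda>u. p*u + q*u^2/2 + r*u^3/3) a)) {a..c}"
    apply (rule fundamental_theorem_of_calculus[OF assms])
    apply (auto intro!: derivative_eq_intros simp: has_real_derivative_iff_has_vector_derivative[symmetric])
    done
  then show ?thesis by (simp add: algebra_simps diff_divide_distrib)
qed

lemma step_int:
  fixes a b c p q r :: real
  assumes "a \<le> c" "c \<le> b"
  shows "((\<lambda>u. if u \<le> c then p + q*u + r*u^2 else 0) has_integral (p*(c-a) + q*(c^2-a^2)/2 + r*(c^3-a^3)/3)) {a..b}"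
proof -
  have 1: "((\<lambda>u. if u \<le> c then p + q*u + r*u^2 else 0) has_integral (p*(c-a) + q*(c^2-a^2)/2 + r*(c^3-a^3)/3)) {a..c}"
    by (rule has_integral_eq[OF _ poly_int[OF assms(1)]]) auto
  have 2: "((\<lambda>u. if u \<le> c then p + q*u + r*u^2 else 0) has_integral 0) {c..b}"
    by (rule has_integral_spike_finite[of "{c}" _ _ "\<lambda>_. 0"]) auto
  show ?thesis using has_integral_combine[OF assms 1 2] by simp
qed


lemma key:
  fixes a b :: real and I :: "real set" and n :: "real \<Rightarrow> real"
  assumes b: "b = a + 1" and fin: "finite I" and sub: "I \<subseteq> {a..b}"
  shows "3 * (\<Sum>y\<in>I. n y * ((y-a)*(b-y)))^2 \<le> (\<Sum>y\<in>I. \<Sum>z\<in>I. n y * n z * (min y z - a - (y-a)*(z-a)))"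
proof -
  define f where "f y u = (if u \<le> y then 1 else 0) - (y-a)" for y u :: real
  define h where "h u = 1 + 2*a - 2*u" for u :: real
  define B where "B = (\<Sum>y\<in>I. n y * ((y-a)*(b-y)))"
  define A where "A = (\<Sum>y\<in>I. \<Sum>z\<in>I. n y * n z * (min y z - a - (y-a)*(z-a)))"
  define L where "L = 3 * B"
  have ab: "a \<le> b" using b by simp
  have i1: "((\<lambda>u. f y u * f z u) has_integral (min y z - a - (y-a)*(z-a))) {a..b}"
    if "y \<in> I" "z \<in> I" for y z
  proof -
    have yz: "a \<le> y" "y \<le> b" "a \<le> z" "z \<le> b" using that sub by auto
    have "((\<lambda>u. (if u \<le> min y z then 1 + 0*u + 0*u^2 else 0) + (if u \<le> y then -(z-a) + 0*u + 0*u^2 else 0)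
       + (if u \<le> z then -(y-a) + 0*u + 0*u^2 else 0) + (if u \<le> b then (y-a)*(z-a) + 0*u + 0*u^2 else 0))
       has_integral ((1*(min y z - a) + 0*((min y z)^2-a^2)/2 + 0*((min y z)^3-a^3)/3)
        + (-(z-a)*(y-a) + 0*(y^2-a^2)/2 + 0*(y^3-a^3)/3)
        + (-(y-a)*(z-a) + 0*(z^2-a^2)/2 + 0*(z^3-a^3)/3)
        + ((y-a)*(z-a)*(b-a) + 0*(b^2-a^2)/2 + 0*(b^3-a^3)/3))) {a..b}"
      by (intro has_integral_add step_int) (use yz in auto)
    then have "((\<lambda>u. (if u \<le> min y z then 1 + 0*u + 0*u^2 else 0) + (if u \<le> y then -(z-a) + 0*u + 0*u^2 else 0)
       + (if u \<le> z then -(y-a) + 0*u + 0*u^2 else 0) + (if u \<le> b then (y-a)*(z-a) + 0*u + 0*u^2 else 0))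
       has_integral (min y z - a - (y-a)*(z-a))) {a..b}"
      by (simp add: b algebra_simps)
    then show ?thesis
      by (rule has_integral_eq[rotated]) (auto simp: f_def b algebra_simps)
  qed
  have i2: "((\<lambda>u. f y u * h u) has_integral ((y-a)*(b-y))) {a..b}"
    if "y \<in> I" for y
  proof -
    have yz: "a \<le> y" "y \<le> b" using that sub by auto
    have "((\<lambda>u. (if u \<le> y then (1+2*a) + (-2)*u + 0*u^2 else 0)
       + (if u \<le> b then -(y-a)*(1+2*a) + (2*(y-a))*u + 0*u^2 else 0))
       has_integral (((1+2*a)*(y - a) + (-2)*(y^2-a^2)/2 + 0*(y^3-a^3)/3)
        + (-(y-a)*(1+2*a)*(b-a) + (2*(y-a))*(b^2-a^2)/2 + 0*(b^3-a^3)/3))) {a..b}"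
      by (intro has_integral_add step_int) (use yz in auto)
    moreover have "(((1+2*a)*(y - a) + (-2)*(y^2-a^2)/2 + 0*(y^3-a^3)/3)
        + (-(y-a)*(1+2*a)*(b-a) + (2*(y-a))*(b^2-a^2)/2 + 0*(b^3-a^3)/3)) = ((y-a)*(b-y))"
      by (simp add: b field_simps power2_eq_square)
    ultimately have "((\<lambda>u. (if u \<le> y then (1+2*a) + (-2)*u + 0*u^2 else 0)
       + (if u \<le> b then -(y-a)*(1+2*a) + (2*(y-a))*u + 0*u^2 else 0))
       has_integral ((y-a)*(b-y))) {a..b}"
      by metis
    then show ?thesis
      by (rule has_integral_eq[rotated]) (auto simp: f_def h_def b algebra_simps)
  qed
  have i3: "((\<lambda>u. h u * h u) has_integral (1/3)) {a..b}"
  proof -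
    have "((\<lambda>u. (if u \<le> b then (1+2*a)^2 + (-4*(1+2*a))*u + 4*u^2 else 0))
       has_integral ((1+2*a)^2*(b - a) + (-4*(1+2*a))*(b^2-a^2)/2 + 4*(b^3-a^3)/3)) {a..b}"
      by (rule step_int) (use ab in auto)
    moreover have "((1+2*a)^2*(b - a) + (-4*(1+2*a))*(b^2-a^2)/2 + 4*(b^3-a^3)/3) = 1/3"
      by (simp add: b field_simps power2_eq_square power3_eq_cube)
    ultimately have "((\<lambda>u. (if u \<le> b then (1+2*a)^2 + (-4*(1+2*a))*u + 4*u^2 else 0))
       has_integral (1/3)) {a..b}"
      by metis
    then show ?thesis
      by (rule has_integral_eq[rotated]) (auto simp: h_def b algebra_simps power2_eq_square)
  qed
  have tot: "((\<lambda>u. (\<Sum>y\<in>I. \<Sum>z\<in>I. n y * n z * (f y u * f z u)) - 2 * L * (\<Sum>y\<in>I. n y * (f y u * h u))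
      + L^2 * (h u * h u)) has_integral (A - 2 * L * B + L^2 * (1/3))) {a..b}"
    unfolding A_def B_def
    by (intro has_integral_add has_integral_diff has_integral_mult_right has_integral_sum fin i1 i2 i3)
  have "0 \<le> A - 2 * L * B + L^2 * (1/3)"
  proof (rule has_integral_nonneg[OF has_integral_eq[OF _ tot]])
    fix u
    show "(\<Sum>y\<in>I. \<Sum>z\<in>I. n y * n z * (f y u * f z u)) - 2 * L * (\<Sum>y\<in>I. n y * (f y u * h u))
      + L^2 * (h u * h u) = ((\<Sum>y\<in>I. n y * f y u) - L * h u)^2"
      by (simp add: power2_eq_square algebra_simps sum_product sum_distrib_left sum_distrib_right)
  qed simp
  then show ?thesis unfolding L_def A_def[symmetric] B_def[symmetric] by (simp add: power2_eq_square)
qed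


lemma mass_single: "mass mu {x} = mu x"
  unfolding mass_def supp_def by (cases "mu x = 0") auto

lemma moment_T:
  assumes "finite T" "supp mu \<subseteq> T"
  shows "moment j mu = (\<Sum>x\<in>T. mu x * x^j)"
  unfolding moment_def
  by (rule sum.mono_neutral_left[OF assms]) (auto simp: supp_def)

lemma spread_T:
  assumes fin: "finite T" and sub: "supp mu \<subseteq> T"
  shows "2 * spread mu = (\<Sum>x\<in>T. \<Sum>y\<in>T. \<bar>x-y\<bar>*mu x*mu y)"
proof -
  define P where "P = {(x,y). x \<in> T \<and> y \<in> T \<and> x < y}"
  have finP: "finite P"
    by (rule finite_subset[OF _ finite_cartesian_product[OF fin fin]]) (auto simp: P_def)
  have s1: "spread mu = (\<Sum>(x,y)\<in>P. \<bar>x-y\<bar>*mu x*mu y)"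
    unfolding spread_def
    by (rule sum.mono_neutral_left[OF finP]) (use sub in \<open>auto simp: P_def supp_def\<close>)
  have "(\<Sum>(x,y)\<in>P. \<bar>x-y\<bar>*mu x*mu y) = (\<Sum>p\<in>{p\<in>T\<times>T. fst p < snd p}. (\<lambda>(x,y). \<bar>x-y\<bar>*mu x*mu y) p)"
    by (rule sum.cong) (auto simp: P_def)
  also have "\<dots> = (\<Sum>p\<in>T\<times>T. if fst p < snd p then (\<lambda>(x,y). \<bar>x-y\<bar>*mu x*mu y) p else 0)"
    using sum.inter_filter[of "T\<times>T" "\<lambda>(x,y). \<bar>x-y\<bar>*mu x*mu y" "\<lambda>p. fst p < snd p"] fin by simp
  also have "\<dots> = (\<Sum>x\<in>T. \<Sum>y\<in>T. if x < y then \<bar>x-y\<bar>*mu x*mu y else 0)"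
    by (simp add: sum.cartesian_product) (rule sum.cong, auto)
  finally have s2: "spread mu = (\<Sum>x\<in>T. \<Sum>y\<in>T. if x < y then \<bar>x-y\<bar>*mu x*mu y else 0)"
    using s1 by simp
  have s3: "(\<Sum>x\<in>T. \<Sum>y\<in>T. if y < x then \<bar>x-y\<bar>*mu x*mu y else 0)
      = (\<Sum>x\<in>T. \<Sum>y\<in>T. if x < y then \<bar>x-y\<bar>*mu x*mu y else 0)"
    by (subst sum.swap) (intro sum.cong refl, simp add: abs_minus_commute mult.commute)
  have "(\<Sum>x\<in>T. \<Sum>y\<in>T. \<bar>x-y\<bar>*mu x*mu y) = (\<Sum>x\<in>T. \<Sum>y\<in>T. (if x < y then \<bar>x-y\<bar>*mu x*mu y else 0)
      + (if y < x then \<bar>x-y\<bar>*mu x*mu y else 0))"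
    by (intro sum.cong refl) auto
  also have "\<dots> = 2 * spread mu"
    by (simp add: sum.distrib s2 s3)
  finally show ?thesis by simp
qed

lemma split4:
  fixes g :: "real \<Rightarrow> real \<Rightarrow> real"
  assumes "finite T" "Ou = {x\<in>T. \<not> P x}" "I = {x\<in>T. P x}"
  shows "(\<Sum>x\<in>T. \<Sum>y\<in>T. g x y) = (\<Sum>x\<in>Ou. \<Sum>y\<in>Ou. g x y) + (\<Sum>x\<in>Ou. \<Sum>y\<in>I. g x y)
     + (\<Sum>x\<in>I. \<Sum>y\<in>Ou. g x y) + (\<Sum>x\<in>I. \<Sum>y\<in>I. g x y)"
proof -
  have sp: "sum f T = sum f Ou + sum f I" for f :: "real \<Rightarrow> real"
  proof -
    have "T = Ou \<union> I" "Ou \<inter> I = {}" using assms by auto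
    moreover have "finite Ou" "finite I" using assms by auto
    ultimately show ?thesis by (simp add: sum.union_disjoint)
  qed
  show ?thesis by (simp add: sp sum.distrib)
qed



theorem mainTheorem6:
  fixes a b :: real and mu0 mu1 :: "real \<Rightarrow> real"
  assumes "b - a = 1"
    and "is_distribution mu0"
    and "extreme_move a b mu0 mu1"
  shows "spread mu1 - spread mu0 \<ge> 3 * (moment 2 mu1 - moment 2 mu0) ^ 2"
proof -
  have b: "b = a + 1" using assms(1) by simp
  have d1: "is_distribution mu1" and z: "mass mu1 {a<..<b} = 0"
    and out: "\<And>x. x \<notin> {a..b} \<Longrightarrow> mass mu1 {x} = mass mu0 {x}"
    and M0: "moment 0 mu1 = moment 0 mu0" and M1: "moment 1 mu1 = moment 1 mu0"
    using assms(3) unfolding extreme_move_def by auto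
  have fin0: "finite (supp mu0)" using assms(2) by (simp add: is_distribution_def)
  have fin1: "finite (supp mu1)" and nn1: "\<And>x. mu1 x \<ge> 0" using d1 by (auto simp: is_distribution_def)
  have mout: "mu1 x = mu0 x" if "\<not> (a \<le> x \<and> x \<le> b)" for x
    using out[of x] that by (simp add: mass_single)
  have min: "mu1 x = 0" if "a < x" "x < b" for x
  proof (rule ccontr)
    assume ne: "mu1 x \<noteq> 0"
    have "finite (supp mu1 \<inter> {a<..<b})" using fin1 by simp
    then have "\<forall>y\<in>supp mu1 \<inter> {a<..<b}. mu1 y = 0"
      using z nn1 unfolding mass_def by (subst sum_nonneg_eq_0_iff[symmetric]) auto
    then show False using ne that by (auto simp: supp_def)
  qed
  define T where "T = supp mu0 \<union> {a,b}"
  have finT: "finite T" using fin0 by (simp add: T_def)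
  have sub0: "supp mu0 \<subseteq> T" by (auto simp: T_def)
  have sub1: "supp mu1 \<subseteq> T"
  proof
    fix x assume x: "x \<in> supp mu1"
    show "x \<in> T"
    proof (cases "a \<le> x \<and> x \<le> b")
      case True
      then have "x = a \<or> x = b \<or> (a < x \<and> x < b)" by auto
      then show ?thesis using min x by (auto simp: T_def supp_def)
    next
      case False
      then show ?thesis using mout[OF False] x by (auto simp: T_def supp_def)
    qed
  qed
  define I where "I = {x\<in>T. a \<le> x \<and> x \<le> b}"
  define Ou where "Ou = {x\<in>T. \<not> (a \<le> x \<and> x \<le> b)}"
  have finI: "finite I" and finO: "finite Ou" using finT by (auto simp: I_def Ou_def)
  have Isub: "I \<subseteq> {a..b}" by (auto simp: I_def)
  have sp: "sum f T = sum f Ou + sum f I" for f :: "real \<Rightarrow> real"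
  proof -
    have "T = Ou \<union> I" "Ou \<inter> I = {}" by (auto simp: I_def Ou_def)
    then show ?thesis using finI finO by (simp add: sum.union_disjoint)
  qed
  have Oeq: "mu1 x = mu0 x" if "x \<in> Ou" for x using mout that by (auto simp: Ou_def)
  define \<alpha> where "\<alpha> = mu1 a"
  define \<beta> where "\<beta> = mu1 b"
  have R: "(\<Sum>y\<in>I. mu1 y * k y) = \<alpha> * k a + \<beta> * k b" for k :: "real \<Rightarrow> real"
  proof -
    have "(\<Sum>y\<in>I. mu1 y * k y) = (\<Sum>y\<in>{a,b}. mu1 y * k y)"
    proof (rule sum.mono_neutral_right[OF finI])
      show "{a,b} \<subseteq> I" using b by (auto simp: I_def T_def)
      show "\<forall>i\<in>I - {a, b}. mu1 i * k i = 0" using min by (auto simp: I_def)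
    qed
    then show ?thesis using b by (simp add: \<alpha>_def \<beta>_def)
  qed
  define n where "n = mu0"
  have Osum: "(\<Sum>x\<in>Ou. mu1 x * g x) = (\<Sum>x\<in>Ou. mu0 x * g x)" for g :: "real \<Rightarrow> real"
    by (rule sum.cong) (auto simp: Oeq)
  have E0: "\<alpha> + \<beta> = (\<Sum>y\<in>I. n y)"
  proof -
    have "moment 0 mu1 = (\<Sum>x\<in>Ou. mu1 x * x^0) + (\<Sum>x\<in>I. mu1 x * x^0)"
      by (simp add: moment_T[OF finT sub1] sp)
    moreover have "moment 0 mu0 = (\<Sum>x\<in>Ou. mu0 x * x^0) + (\<Sum>x\<in>I. mu0 x * x^0)"
      by (simp add: moment_T[OF finT sub0] sp)
    ultimately show ?thesis using M0 R[of "\<lambda>x. x^0"] Osum[of "\<lambda>x. x^0"] by (simp add: n_def)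
  qed
  have E1: "\<alpha> * a + \<beta> * b = (\<Sum>y\<in>I. n y * y)"
  proof -
    have "moment 1 mu1 = (\<Sum>x\<in>Ou. mu1 x * x^1) + (\<Sum>x\<in>I. mu1 x * x^1)"
      by (simp only: moment_T[OF finT sub1] sp)
    moreover have "moment 1 mu0 = (\<Sum>x\<in>Ou. mu0 x * x^1) + (\<Sum>x\<in>I. mu0 x * x^1)"
      by (simp only: moment_T[OF finT sub0] sp)
    ultimately show ?thesis using M1 R[of "\<lambda>x. x^1"] Osum[of "\<lambda>x. x^1"] by (simp add: n_def)
  qed
  have hb: "\<beta> = (\<Sum>y\<in>I. n y * (y - a))"
  proof -
    have "(\<Sum>y\<in>I. n y * (y - a)) = (\<Sum>y\<in>I. n y * y) - a * (\<Sum>y\<in>I. n y)"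
      by (simp add: algebra_simps sum_subtractf sum_distrib_left)
    also have "\<dots> = (\<alpha> * a + \<beta> * b) - a * (\<alpha> + \<beta>)" using E0 E1 by simp
    also have "\<dots> = \<beta>" using b by (simp add: algebra_simps)
    finally show ?thesis by simp
  qed
  have ha: "\<alpha> = (\<Sum>y\<in>I. n y * (b - y))"
  proof -
    have "(\<Sum>y\<in>I. n y * (b - y)) = b * (\<Sum>y\<in>I. n y) - (\<Sum>y\<in>I. n y * y)"
      by (simp add: algebra_simps sum_subtractf sum_distrib_left)
    also have "\<dots> = b * (\<alpha> + \<beta>) - (\<alpha> * a + \<beta> * b)" using E0 E1 by simp
    also have "\<dots> = \<alpha>" using b by (simp add: algebra_simps)
    finally show ?thesis by simp
  qed
  define B where "B = (\<Sum>y\<in>I. n y * ((y-a)*(b-y)))"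
  have M2: "moment 2 mu1 - moment 2 mu0 = B"
  proof -
    have "moment 2 mu1 = (\<Sum>x\<in>Ou. mu1 x * x^2) + (\<Sum>x\<in>I. mu1 x * x^2)"
      by (simp only: moment_T[OF finT sub1] sp)
    moreover have "moment 2 mu0 = (\<Sum>x\<in>Ou. mu0 x * x^2) + (\<Sum>x\<in>I. mu0 x * x^2)"
      by (simp only: moment_T[OF finT sub0] sp)
    ultimately have "moment 2 mu1 - moment 2 mu0 = \<alpha> * a^2 + \<beta> * b^2 - (\<Sum>x\<in>I. n x * x^2)"
      using R[of "\<lambda>x. x^2"] Osum[of "\<lambda>x. x^2"] by (simp add: n_def)
    also have "\<dots> = (\<Sum>y\<in>I. n y * ((b - y) * a^2 + (y - a) * b^2 - y^2))"
      unfolding ha hb by (simp add: algebra_simps sum_subtractf sum_distrib_left sum_distrib_right sum.distrib)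
    also have "\<dots> = B" unfolding B_def
      by (rule sum.cong) (auto simp: b algebra_simps power2_eq_square)
    finally show ?thesis .
  qed
  define A where "A = (\<Sum>y\<in>I. \<Sum>z\<in>I. n y * n z * (min y z - a - (y-a)*(z-a)))"
  define G where "G mu x y = \<bar>x-y\<bar>*mu x*mu y" for mu :: "real \<Rightarrow> real" and x y
  have DS: "2 * spread mu = (\<Sum>x\<in>Ou. \<Sum>y\<in>Ou. G mu x y) + 2 * (\<Sum>x\<in>Ou. \<Sum>y\<in>I. G mu x y)
     + (\<Sum>x\<in>I. \<Sum>y\<in>I. G mu x y)" if "supp mu \<subseteq> T" for mu
  proof -
    have sw: "(\<Sum>x\<in>I. \<Sum>y\<in>Ou. G mu x y) = (\<Sum>x\<in>Ou. \<Sum>y\<in>I. G mu x y)"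
      by (subst sum.swap) (intro sum.cong refl, simp add: G_def abs_minus_commute mult.commute)
    have e: "2 * spread mu = (\<Sum>x\<in>T. \<Sum>y\<in>T. G mu x y)" using spread_T[OF finT that] by (simp add: G_def)
    show ?thesis
      using e split4[OF finT Ou_def I_def, of "G mu"] sw by simp
  qed
  have OO: "(\<Sum>x\<in>Ou. \<Sum>y\<in>Ou. G mu1 x y) = (\<Sum>x\<in>Ou. \<Sum>y\<in>Ou. G mu0 x y)"
    by (intro sum.cong refl) (simp add: G_def Oeq)
  have lin: "(\<Sum>y\<in>I. n y * \<bar>x-y\<bar>) = \<alpha> * \<bar>x-a\<bar> + \<beta> * \<bar>x-b\<bar>" if "x \<in> Ou" for x
  proof (cases "x < a")
    case True
    have "(\<Sum>y\<in>I. n y * \<bar>x-y\<bar>) = (\<Sum>y\<in>I. n y * y) - x * (\<Sum>y\<in>I. n y)"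
    proof -
      have "(\<Sum>y\<in>I. n y * \<bar>x-y\<bar>) = (\<Sum>y\<in>I. n y * y - x * n y)"
        by (rule sum.cong) (use True in \<open>auto simp: I_def algebra_simps\<close>)
      then show ?thesis by (simp add: sum_subtractf sum_distrib_left)
    qed
    also have "\<dots> = (\<alpha> * a + \<beta> * b) - x * (\<alpha> + \<beta>)" using E0 E1 by simp
    also have "\<dots> = \<alpha> * \<bar>x-a\<bar> + \<beta> * \<bar>x-b\<bar>" using True b by (simp add: algebra_simps)
    finally show ?thesis .
  next
    case False
    then have xb: "x > b" using that by (auto simp: Ou_def)
    have "(\<Sum>y\<in>I. n y * \<bar>x-y\<bar>) = x * (\<Sum>y\<in>I. n y) - (\<Sum>y\<in>I. n y * y)"
    proof -
      have "(\<Sum>y\<in>I. n y * \<bar>x-y\<bar>) = (\<Sum>y\<in>I. x * n y - n y * y)"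
        by (rule sum.cong) (use xb in \<open>auto simp: I_def algebra_simps\<close>)
      then show ?thesis by (simp add: sum_subtractf sum_distrib_left)
    qed
    also have "\<dots> = x * (\<alpha> + \<beta>) - (\<alpha> * a + \<beta> * b)" using E0 E1 by simp
    also have "\<dots> = \<alpha> * \<bar>x-a\<bar> + \<beta> * \<bar>x-b\<bar>" using xb b by (simp add: algebra_simps)
    finally show ?thesis .
  qed
  have OI: "(\<Sum>x\<in>Ou. \<Sum>y\<in>I. G mu1 x y) = (\<Sum>x\<in>Ou. \<Sum>y\<in>I. G mu0 x y)"
  proof (rule sum.cong[OF refl])
    fix x assume x: "x \<in> Ou"
    have "(\<Sum>y\<in>I. G mu1 x y) = (\<Sum>y\<in>I. mu1 y * (\<bar>x-y\<bar>*mu1 x))"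
      by (rule sum.cong) (auto simp: G_def)
    also have "\<dots> = mu1 x * (\<alpha> * \<bar>x-a\<bar> + \<beta> * \<bar>x-b\<bar>)" by (simp add: R algebra_simps)
    also have "\<dots> = mu0 x * (\<Sum>y\<in>I. n y * \<bar>x-y\<bar>)" using lin[OF x] Oeq[OF x] by simp
    also have "\<dots> = (\<Sum>y\<in>I. G mu0 x y)"
      by (simp add: sum_distrib_left G_def n_def algebra_simps)
    finally show "(\<Sum>y\<in>I. G mu1 x y) = (\<Sum>y\<in>I. G mu0 x y)" .
  qed
  have II: "(\<Sum>x\<in>I. \<Sum>y\<in>I. G mu1 x y) = 2 * \<alpha> * \<beta>"
  proof -
    have "(\<Sum>x\<in>I. \<Sum>y\<in>I. G mu1 x y) = (\<Sum>x\<in>I. mu1 x * (\<alpha> * \<bar>x-a\<bar> + \<beta> * \<bar>x-b\<bar>))"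
    proof (rule sum.cong[OF refl])
      fix x
      have "(\<Sum>y\<in>I. G mu1 x y) = (\<Sum>y\<in>I. mu1 y * (\<bar>x-y\<bar>*mu1 x))"
        by (rule sum.cong) (auto simp: G_def)
      also have "\<dots> = mu1 x * (\<alpha> * \<bar>x-a\<bar> + \<beta> * \<bar>x-b\<bar>)" by (simp add: R algebra_simps)
      finally show "(\<Sum>y\<in>I. G mu1 x y) = mu1 x * (\<alpha> * \<bar>x-a\<bar> + \<beta> * \<bar>x-b\<bar>)" .
    qed
    also have "\<dots> = 2 * \<alpha> * \<beta>" by (simp add: R b)
    finally show ?thesis .
  qed
  define II0 where "II0 = (\<Sum>y\<in>I. \<Sum>z\<in>I. \<bar>y-z\<bar> * n y * n z)"
  have S1: "spread mu1 - spread mu0 = \<alpha> * \<beta> - II0 / 2"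
  proof -
    have "2 * spread mu1 - 2 * spread mu0 = 2 * \<alpha> * \<beta> - II0"
      unfolding DS[OF sub1] DS[OF sub0] OO OI II by (simp add: II0_def G_def n_def)
    then show ?thesis by simp
  qed
  have ab: "\<alpha> * \<beta> = (\<Sum>y\<in>I. \<Sum>z\<in>I. n y * n z * ((b-y)*(z-a)))"
    unfolding ha hb sum_product by (simp add: algebra_simps)
  have sym: "(\<Sum>y\<in>I. \<Sum>z\<in>I. n y * n z * z) = (\<Sum>y\<in>I. \<Sum>z\<in>I. n y * n z * y)"
    by (subst sum.swap) (simp add: mult.commute)
  have "\<alpha> * \<beta> - II0 / 2 = (\<Sum>y\<in>I. \<Sum>z\<in>I. n y * n z * ((b-y)*(z-a)) - \<bar>y-z\<bar> * n y * n z / 2)"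
    unfolding ab II0_def by (simp add: sum_subtractf sum_divide_distrib)
  also have "\<dots> = (\<Sum>y\<in>I. \<Sum>z\<in>I. n y * n z * (min y z - a - (y-a)*(z-a)) + (n y * n z * z - n y * n z * y) / 2)"
    by (intro sum.cong refl) (auto simp: b min_def abs_if field_simps)
  also have "\<dots> = A"
    unfolding A_def by (simp add: sum.distrib sum_subtractf sum_divide_distrib[symmetric] sym)
  finally have S: "spread mu1 - spread mu0 = A" using S1 by simp
  show ?thesis using key[OF b finI Isub, of n] S M2 unfolding A_def B_def by simp
qed

end
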